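(* For every $t\ge0$, the map $\mathcal K_u(X,J)\to\mathbb R$, $\Psi\mapsto\underline P^\Psi(t)$, is continuous with respect to the metric $d_u$.
   Context: Fix $d\in\mathbb N$, a compact set $X\subset\mathbb R^d$ equal to the closure of its interior with $\partial X$ smooth or $X$ convex, an open connected $V\supset X$, and constants $K\ge1$, $\eta<1$. Let $J=(I^{(k)})_{k\ge1}$ be a sequence of finite sets. An NCIFS with alphabet $J$ is a sequence $\Phi^{(j)}=(\phi^{(j)}_i:X\to X)_{i\in I^{(j)}}$ satisfying: - images of $\operatorname{int}X$ under distinct maps of the same level are disjoint; - every map extends to a $C^1$ conformal diffeomorphism of $V$ into $V$; - every composition $\phi=\phi^{(k)}_{\omega_k}\circ\cdots\circ\phi^{(l)}_{\omega_l}$ satisfies $|\phi'(x)|\le K|\phi'(y)|$ for $x,y\in V$; - $\|D\phi^{(j)}_i\|:=\sup_{x\in X}|(\phi^{(j)}_i)'(x)|\le\eta$. $\mathcal K_u(X,J)$ is the set of such systems satisfying: - (Ka) there is $\kappa>0$ with $\inf\{|D\phi^{(n)}_a(x)|:n\ge1,a\in I^{(n)},x\in X\}>\kappa$; - (Kb) the family $\{|D\phi^{(n)}_a|:n\ge1,a\in I^{(n)}\}$ is uniformly equicontinuous on $X$. Here $|D\phi(x)|$ is the scaling factor of the conformal derivative. The metric is \[d_u(\Phi,\Psi)=\sup_{n\ge1}\max_{a\in I^{(n)}}\max\{\|\phi^{(n)}_a-\psi^{(n)}_a\|_\infty,\|D\phi^{(n)}_a-D\psi^{(n)}_a\|_\infty\}.\]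 The lower pressure is $\underline P^\Phi(t)=\liminf_{n\to\infty}\frac1n\log\sum_{\omega\in\prod_{j\le n}I^{(j)}}\|D(\phi^{(1)}_{\omega_1}\circ\cdots\circ\phi^{(n)}_{\omega_n})\|^t$. *)

theory Defs
  imports "HOL-Analysis.Analysis"
begin

primrec iter_dderiv :: "'a::real_normed_vector list \<Rightarrow> ('a \<Rightarrow> real) \<Rightarrow> 'a \<Rightarrow> real" where
  "iter_dderiv [] g = g"
| "iter_dderiv (v # vs) g = (\<lambda>x. frechet_derivative (iter_dderiv vs g) (at x) v)"

definition smooth_on :: "'a::real_normed_vector set \<Rightarrow> ('a \<Rightarrow> real) \<Rightarrow> bool" where
  "smooth_on U g \<longleftrightarrow> (\<forall>vs. iter_dderiv vs g differentiable_on U)"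

definition smooth_boundary :: "'a::euclidean_space set \<Rightarrow> bool" where
  "smooth_boundary X \<longleftrightarrow>
     (\<forall>p\<in>frontier X. \<exists>U g. open U \<and> p \<in> U \<and> smooth_on U g \<and>
        frechet_derivative g (at p) \<noteq> (\<lambda>v. 0) \<and>
        X \<inter> U = {x\<in>U. g x \<le> 0})"

definition conformal_linear :: "('a::real_normed_vector \<Rightarrow> 'a) \<Rightarrow> bool" where
  "conformal_linear L \<longleftrightarrow> linear L \<and> (\<exists>c>0. \<forall>v. norm (L v) = c * norm v)"

definition C1_conformal_on :: "'a::euclidean_space set \<Rightarrow> ('a \<Rightarrow> 'a) \<Rightarrow> bool" where
  "C1_conformal_on V f \<longleftrightarrow>
     (\<exists>f'. (\<forall>x\<in>V. (f has_derivative blinfun_apply (f' x)) (at x)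
                   \<and> conformal_linear (blinfun_apply (f' x)))
          \<and> continuous_on V f')"

definition scal :: "('a::real_normed_vector \<Rightarrow> 'a) \<Rightarrow> 'a \<Rightarrow> real" where
  "scal f x = onorm (frechet_derivative f (at x))"

definition normD :: "('a::real_normed_vector \<Rightarrow> 'a) \<Rightarrow> 'a set \<Rightarrow> real" where
  "normD f X = (SUP x\<in>X. scal f x)"

text \<open>A system is Phi :: nat => 'b => 'a => 'a, with Phi n a the map phi^(n)_a
  (n \<ge> 1, a \<in> I n).  wcomp Phi w k m = phi^(k)_(w k) o ... o phi^(k+m-1)_(w (k+m-1)).\<close>
primrec wcomp :: "(nat \<Rightarrow> 'b \<Rightarrow> 'a \<Rightarrow> 'a) \<Rightarrow> (nat \<Rightarrow> 'b) \<Rightarrow> nat \<Rightarrow> nat \<Rightarrow> 'a \<Rightarrow> 'a" where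
  "wcomp Phi w k 0 = id"
| "wcomp Phi w k (Suc m) = wcomp Phi w k m \<circ> Phi (k + m) (w (k + m))"

definition NCIFS ::
  "'a::euclidean_space set \<Rightarrow> 'a set \<Rightarrow> real \<Rightarrow> real \<Rightarrow> (nat \<Rightarrow> 'b set)
     \<Rightarrow> (nat \<Rightarrow> 'b \<Rightarrow> 'a \<Rightarrow> 'a) \<Rightarrow> bool" where
  "NCIFS X V K \<eta> I Phi \<longleftrightarrow>
     (\<forall>n\<ge>1. \<forall>a\<in>I n. Phi n a ` X \<subseteq> X) \<and>
     (\<forall>n\<ge>1. \<forall>a\<in>I n. \<forall>b\<in>I n. a \<noteq> b \<longrightarrow>
          Phi n a ` interior X \<inter> Phi n b ` interior X = {}) \<and>
     (\<forall>n\<ge>1. \<forall>a\<in>I n. inj_on (Phi n a) V \<and> Phi n a ` V \<subseteq> V \<and> C1_conformal_on V (Phi n a)) \<and>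
     (\<forall>k\<ge>1. \<forall>m\<ge>1. \<forall>w. (\<forall>j\<in>{k..<k+m}. w j \<in> I j) \<longrightarrow>
          (\<forall>x\<in>V. \<forall>y\<in>V. scal (wcomp Phi w k m) x \<le> K * scal (wcomp Phi w k m) y)) \<and>
     (\<forall>n\<ge>1. \<forall>a\<in>I n. normD (Phi n a) X \<le> \<eta>)"

definition Ku ::
  "'a::euclidean_space set \<Rightarrow> 'a set \<Rightarrow> real \<Rightarrow> real \<Rightarrow> (nat \<Rightarrow> 'b set)
     \<Rightarrow> (nat \<Rightarrow> 'b \<Rightarrow> 'a \<Rightarrow> 'a) set" where
  "Ku X V K \<eta> I = {Phi. NCIFS X V K \<eta> I Phi \<and>
     (\<exists>\<kappa>>0. (INF p\<in>{(n, a, x). n \<ge> 1 \<and> a \<in> I n \<and> x \<in> X}.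
                  scal (Phi (fst p) (fst (snd p))) (snd (snd p))) > \<kappa>) \<and>
     (\<forall>\<epsilon>>0. \<exists>\<delta>>0. \<forall>n\<ge>1. \<forall>a\<in>I n. \<forall>x\<in>X. \<forall>y\<in>X. dist x y < \<delta> \<longrightarrow>
          \<bar>scal (Phi n a) x - scal (Phi n a) y\<bar> < \<epsilon>)}"

text \<open>The metric d_u (extended-real valued to avoid junk values of Sup).\<close>
definition du ::
  "'a::euclidean_space set \<Rightarrow> (nat \<Rightarrow> 'b set) \<Rightarrow> (nat \<Rightarrow> 'b \<Rightarrow> 'a \<Rightarrow> 'a)
     \<Rightarrow> (nat \<Rightarrow> 'b \<Rightarrow> 'a \<Rightarrow> 'a) \<Rightarrow> ereal" where
  "du X I Phi Psi = (SUP n\<in>{1..}. SUP a\<in>I n.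
      max (SUP x\<in>X. ereal (norm (Phi n a x - Psi n a x)))
          (SUP x\<in>X. ereal (onorm (\<lambda>v. frechet_derivative (Phi n a) (at x) v
                                     - frechet_derivative (Psi n a) (at x) v))))"

definition lower_pressure ::
  "'a::euclidean_space set \<Rightarrow> (nat \<Rightarrow> 'b set) \<Rightarrow> (nat \<Rightarrow> 'b \<Rightarrow> 'a \<Rightarrow> 'a) \<Rightarrow> real \<Rightarrow> ereal" where
  "lower_pressure X I Phi t = liminf (\<lambda>n. ereal ((1 / real n) *
      ln (\<Sum>w\<in>PiE {1..n} I. normD (wcomp Phi w 1 n) X powr t)))"

end

theory Submission
  imports Defs
begin

definition cf :: "('a::euclidean_space \<Rightarrow> 'a) \<Rightarrow> 'a \<Rightarrow> real \<Rightarrow> bool" where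
  "cf f z s \<longleftrightarrow> s > 0 \<and> (\<exists>L. (f has_derivative L) (at z) \<and> (\<forall>v. norm (L v) = s * norm v))"

lemma onorm_conf:
  fixes L :: "'a::euclidean_space \<Rightarrow> 'a"
  assumes "bounded_linear L" "\<And>v. norm (L v) = s * norm v" "s \<ge> 0"
  shows "onorm L = s"
proof (rule antisym)
  show "onorm L \<le> s" by (rule onorm_le) (simp add: assms)
  obtain b :: 'a where b: "b \<in> Basis" using nonempty_Basis by blast
  then have nb: "norm b = 1" by simp
  have "norm (L b) / norm b \<le> onorm L" by (rule le_onorm[OF assms(1)])
  then show "s \<le> onorm L" using assms(2)[of b] nb by simp
qed

lemma cf_scal:
  assumes "cf f z s" shows "scal f z = s"
proof -
  from assms obtain L where s: "s > 0" and d: "(f has_derivative L) (at z)" and n: "\<And>v. norm (L v) = s * norm v"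
    unfolding cf_def by blast
  have "frechet_derivative f (at z) = L" using frechet_derivative_at[OF d] by simp
  moreover have "bounded_linear L" using d has_derivative_bounded_linear by blast
  ultimately show ?thesis unfolding scal_def using onorm_conf[of L s] n s by simp
qed

lemma cf_comp:
  assumes "cf f z s1" "cf g (f z) s2" shows "cf (g \<circ> f) z (s2 * s1)"
proof -
  from assms(1) obtain L where s: "s1 > 0" and d: "(f has_derivative L) (at z)" and n: "\<And>v. norm (L v) = s1 * norm v"
    unfolding cf_def by blast
  from assms(2) obtain M where s2: "s2 > 0" and d2: "(g has_derivative M) (at (f z))" and n2: "\<And>v. norm (M v) = s2 * norm v"
    unfolding cf_def by blast
  have "((\<lambda>x. g (f x)) has_derivative (\<lambda>x. M (L x))) (at z)" by (rule has_derivative_compose[OF d d2])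
  then show ?thesis unfolding cf_def o_def using s s2 n n2 by auto
qed

lemma cf_id: "cf id z 1"
  unfolding cf_def by (auto simp: id_def intro!: exI[of _ "\<lambda>x. x"])

lemma wcomp_left: "wcomp Phi w k (Suc m) = Phi k (w k) \<circ> wcomp Phi w (Suc k) m"
proof (induction m arbitrary: k)
  case 0 then show ?case by simp
next
  case (Suc m)
  have "wcomp Phi w k (Suc (Suc m)) = wcomp Phi w k (Suc m) \<circ> Phi (k + Suc m) (w (k + Suc m))" by (simp only: wcomp.simps)
  also have "\<dots> = (Phi k (w k) \<circ> wcomp Phi w (Suc k) m) \<circ> Phi (k + Suc m) (w (k + Suc m))" by (simp only: Suc.IH)
  also have "\<dots> = Phi k (w k) \<circ> (wcomp Phi w (Suc k) m \<circ> Phi (Suc k + m) (w (Suc k + m)))" by (simp add: o_assoc)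
  also have "\<dots> = Phi k (w k) \<circ> wcomp Phi w (Suc k) (Suc m)" by (simp only: wcomp.simps)
  finally show ?case .
qed

definition valid :: "(nat \<Rightarrow> 'b set) \<Rightarrow> (nat \<Rightarrow> 'b) \<Rightarrow> nat \<Rightarrow> nat \<Rightarrow> bool" where
  "valid I w k m \<longleftrightarrow> k \<ge> 1 \<and> (\<forall>j\<in>{k..<k+m}. w j \<in> I j)"

lemma valid_Suc_right: "valid I w k (Suc m) \<Longrightarrow> valid I w k m \<and> w (k+m) \<in> I (k+m) \<and> k + m \<ge> 1"
  unfolding valid_def by auto

lemma valid_Suc_left: "valid I w k (Suc m) \<Longrightarrow> valid I w (Suc k) m \<and> w k \<in> I k \<and> k \<ge> 1"
  unfolding valid_def by auto

locale ncifs =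
  fixes X V :: "'a::euclidean_space set" and K \<eta> :: real and I :: "nat \<Rightarrow> 'b set"
    and Phi :: "nat \<Rightarrow> 'b \<Rightarrow> 'a \<Rightarrow> 'a"
  assumes nc: "NCIFS X V K \<eta> I Phi" and XV: "X \<subseteq> V" and Xne: "X \<noteq> {}"
begin

lemma nc1: "\<forall>n\<ge>1. \<forall>a\<in>I n. Phi n a ` X \<subseteq> X"
  and nc3: "\<forall>n\<ge>1. \<forall>a\<in>I n. inj_on (Phi n a) V \<and> Phi n a ` V \<subseteq> V \<and> C1_conformal_on V (Phi n a)"
  and nc4: "\<forall>k\<ge>1. \<forall>m\<ge>1. \<forall>w. (\<forall>j\<in>{k..<k+m}. w j \<in> I j) \<longrightarrow>
          (\<forall>x\<in>V. \<forall>y\<in>V. scal (wcomp Phi w k m) x \<le> K * scal (wcomp Phi w k m) y)"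
  and nc5: "\<forall>n\<ge>1. \<forall>a\<in>I n. normD (Phi n a) X \<le> \<eta>"
  using nc unfolding NCIFS_def by auto

lemma mapsX: "n \<ge> 1 \<Longrightarrow> a \<in> I n \<Longrightarrow> x \<in> X \<Longrightarrow> Phi n a x \<in> X"
  using nc1 by blast

lemma mapsV: "n \<ge> 1 \<Longrightarrow> a \<in> I n \<Longrightarrow> x \<in> V \<Longrightarrow> Phi n a x \<in> V"
  using nc3 by blast

lemma cf_Phi: assumes "n \<ge> 1" "a \<in> I n" "x \<in> V" shows "cf (Phi n a) x (scal (Phi n a) x)"
proof -
  have "C1_conformal_on V (Phi n a)" using nc3 assms by blast
  then obtain f' where f': "(Phi n a has_derivative blinfun_apply (f' x)) (at x)"
      "conformal_linear (blinfun_apply (f' x))"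
    using assms(3) unfolding C1_conformal_on_def by blast
  then obtain c where c: "c > 0" "\<And>v. norm (f' x v) = c * norm v" unfolding conformal_linear_def by blast
  then have "cf (Phi n a) x c" unfolding cf_def using f' by blast
  then show ?thesis using cf_scal by metis
qed

lemma wcomp_X: "valid I w k m \<Longrightarrow> x \<in> X \<Longrightarrow> wcomp Phi w k m x \<in> X"
proof (induction m arbitrary: x)
  case 0 then show ?case by simp
next
  case (Suc m) then show ?case using valid_Suc_right[OF Suc.prems(1)] mapsX by simp
qed

lemma wcomp_V: "valid I w k m \<Longrightarrow> x \<in> V \<Longrightarrow> wcomp Phi w k m x \<in> V"
proof (induction m arbitrary: x)
  case 0 then show ?case by simp
next
  case (Suc m) then show ?case using valid_Suc_right[OF Suc.prems(1)] mapsV by simp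
qed

lemma cf_wcomp: "valid I w k m \<Longrightarrow> x \<in> V \<Longrightarrow> cf (wcomp Phi w k m) x (scal (wcomp Phi w k m) x)"
proof (induction m arbitrary: x)
  case 0 then show ?case using cf_id cf_scal by (metis wcomp.simps(1))
next
  case (Suc m)
  note v = valid_Suc_right[OF Suc.prems(1)]
  have "cf (wcomp Phi w k m \<circ> Phi (k + m) (w (k + m))) x
      (scal (wcomp Phi w k m) (Phi (k + m) (w (k + m)) x) * scal (Phi (k + m) (w (k + m))) x)"
    by (rule cf_comp[OF cf_Phi Suc.IH]) (use v Suc.prems mapsV in auto)
  then show ?case using cf_scal by (metis wcomp.simps(2))
qed

lemma scal_wcomp_left:
  assumes "valid I w k (Suc m)" "x \<in> V"
  shows "scal (wcomp Phi w k (Suc m)) x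
     = scal (Phi k (w k)) (wcomp Phi w (Suc k) m x) * scal (wcomp Phi w (Suc k) m) x"
proof -
  note v = valid_Suc_left[OF assms(1)]
  have "cf (Phi k (w k) \<circ> wcomp Phi w (Suc k) m) x
     (scal (Phi k (w k)) (wcomp Phi w (Suc k) m x) * scal (wcomp Phi w (Suc k) m) x)"
    by (rule cf_comp[OF cf_wcomp cf_Phi]) (use v assms wcomp_V in auto)
  then show ?thesis using cf_scal wcomp_left by metis
qed

lemma scal_pos: "valid I w k m \<Longrightarrow> x \<in> V \<Longrightarrow> scal (wcomp Phi w k m) x > 0"
  using cf_wcomp unfolding cf_def by blast

lemma scal1_pos: "n \<ge> 1 \<Longrightarrow> a \<in> I n \<Longrightarrow> x \<in> V \<Longrightarrow> scal (Phi n a) x > 0"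
  using cf_Phi unfolding cf_def by blast

lemma distort: "valid I w k m \<Longrightarrow> m \<ge> 1 \<Longrightarrow> x \<in> V \<Longrightarrow> y \<in> V \<Longrightarrow>
   scal (wcomp Phi w k m) x \<le> K * scal (wcomp Phi w k m) y"
  unfolding valid_def using nc4 by blast

lemma scal1_le: assumes "n \<ge> 1" "a \<in> I n" "x \<in> X" shows "scal (Phi n a) x \<le> \<eta>"
proof -
  obtain y where y: "y \<in> X" using Xne by blast
  have v: "valid I (\<lambda>_. a) n 1" unfolding valid_def using assms by auto
  have bdd: "bdd_above (scal (Phi n a) ` X)"
  proof (rule bdd_aboveI2)
    fix z assume "z \<in> X"
    then show "scal (Phi n a) z \<le> K * scal (Phi n a) y"
      using distort[OF v, of z y] y XV by auto
  qed
  have "scal (Phi n a) x \<le> normD (Phi n a) X" unfolding normD_def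
    by (rule cSUP_upper[OF assms(3) bdd])
  also have "\<dots> \<le> \<eta>" using nc5 assms by blast
  finally show ?thesis .
qed

lemma scal_le: "valid I w k m \<Longrightarrow> x \<in> X \<Longrightarrow> scal (wcomp Phi w k m) x \<le> \<eta> ^ m"
proof (induction m arbitrary: k x)
  case 0 then show ?case using cf_scal[OF cf_id, of x, unfolded id_def] by simp
next
  case (Suc m)
  note v = valid_Suc_left[OF Suc.prems(1)]
  have e: "scal (wcomp Phi w k (Suc m)) x
     = scal (Phi k (w k)) (wcomp Phi w (Suc k) m x) * scal (wcomp Phi w (Suc k) m) x"
    using scal_wcomp_left[OF Suc.prems(1)] Suc.prems(2) XV by blast
  have a: "scal (Phi k (w k)) (wcomp Phi w (Suc k) m x) \<le> \<eta>"
    using scal1_le[of k "w k"] v wcomp_X[of w "Suc k" m x] Suc.prems(2) by blast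
  have b: "scal (wcomp Phi w (Suc k) m) x \<le> \<eta> ^ m" using Suc.IH v Suc.prems(2) by blast
  have xV: "x \<in> V" using Suc.prems(2) XV by blast
  have wV: "wcomp Phi w (Suc k) m x \<in> V" using wcomp_V[OF conjunct1[OF v] xV] .
  have p1: "0 < scal (wcomp Phi w (Suc k) m) x" using scal_pos[OF conjunct1[OF v] xV] .
  have p2: "0 < scal (Phi k (w k)) (wcomp Phi w (Suc k) m x)"
    using scal1_pos[OF _ _ wV] v by blast
  have "scal (Phi k (w k)) (wcomp Phi w (Suc k) m x) * scal (wcomp Phi w (Suc k) m) x \<le> \<eta> * \<eta> ^ m"
    by (rule mult_mono[OF a b]) (use p1 p2 a in linarith)+
  then show ?case unfolding e power_Suc .
qed

end

context ncifs begin

lemma lip: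
  assumes v: "valid I w k m" and a: "a \<in> X" and r: "r > 0" "\<forall>a\<in>X. ball a r \<subseteq> V"
    and K1: "K \<ge> 1" and ab: "norm (b - a) < r"
  shows "norm (wcomp Phi w k m b - wcomp Phi w k m a) \<le> K * \<eta> ^ m * norm (b - a)"
proof (cases "m = 0")
  case True
  have "norm (b - a) \<le> K * norm (b - a)" using mult_right_mono[OF K1 norm_ge_zero[of "b - a"]] by simp
  then show ?thesis using True by simp
next
  case False
  let ?F = "wcomp Phi w k m"
  let ?S = "ball a r"
  have SV: "?S \<subseteq> V" using r a by blast
  have aV: "a \<in> V" using a XV by blast
  have der: "(?F has_derivative frechet_derivative ?F (at z)) (at z within ?S)" if "z \<in> ?S" for z
  proof -
    have "cf ?F z (scal ?F z)" using cf_wcomp[OF v] SV that by blast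
    then obtain L where "(?F has_derivative L) (at z)" unfolding cf_def by blast
    then have "?F differentiable (at z)" unfolding differentiable_def by blast
    then show ?thesis using frechet_derivative_works has_derivative_at_withinI by blast
  qed
  have bnd: "onorm (frechet_derivative ?F (at z)) \<le> K * \<eta> ^ m" if "z \<in> ?S" for z
  proof -
    have "onorm (frechet_derivative ?F (at z)) = scal ?F z" unfolding scal_def ..
    also have "\<dots> \<le> K * scal ?F a" using distort[OF v _ _ aV] False SV that by auto
    also have "\<dots> \<le> K * \<eta> ^ m" using scal_le[OF v a] K1 by simp
    finally show ?thesis .
  qed
  have "b \<in> ?S" using ab by (simp add: dist_norm norm_minus_commute)
  moreover have "a \<in> ?S" using r by simp
  ultimately show ?thesis using differentiable_bound[of ?S ?F "\<lambda>z. frechet_derivative ?F (at z)" "K * \<eta> ^ m" b a] der bnd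
    by auto
qed

end

locale two = P: ncifs X V K \<eta> I Phi + Q: ncifs X V K \<eta> I Psi
  for X V K \<eta> I Phi Psi +
  fixes r \<delta> :: real
  assumes r: "r > 0" "\<forall>a\<in>X. ball a r \<subseteq> V" and K1: "K \<ge> 1" and eta: "\<eta> < 1" "0 \<le> \<eta>"
    and close: "\<forall>n\<ge>1. \<forall>a\<in>I n. \<forall>x\<in>X. norm (Psi n a x - Phi n a x) < \<delta>"
    and dr: "\<delta> \<le> r" and d0: "0 \<le> \<delta>"
begin

lemma tele: "valid I w k m \<Longrightarrow> x \<in> X \<Longrightarrow>
   norm (wcomp Phi w k m x - wcomp Psi w k m x) \<le> K * \<delta> * (1 - \<eta> ^ m) / (1 - \<eta>)"
proof (induction m arbitrary: x)
  case 0 then show ?case by simp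
next
  case (Suc m)
  note v = valid_Suc_right[OF Suc.prems(1)]
  let ?p = "Phi (k + m) (w (k + m)) x" and ?q = "Psi (k + m) (w (k + m)) x"
  have pX: "?p \<in> X" using P.mapsX v Suc.prems(2) by blast
  have qX: "?q \<in> X" using Q.mapsX v Suc.prems(2) by blast
  have pq: "norm (?p - ?q) < \<delta>" using close v Suc.prems(2) by (metis norm_minus_commute)
  have "norm (wcomp Phi w k m ?p - wcomp Phi w k m ?q) \<le> K * \<eta> ^ m * norm (?p - ?q)"
    using P.lip[OF conjunct1[OF v] qX r K1] pq dr by auto
  also have "\<dots> \<le> K * \<eta> ^ m * \<delta>"
    using pq K1 eta by (intro mult_left_mono) auto
  finally have 1: "norm (wcomp Phi w k m ?p - wcomp Phi w k m ?q) \<le> K * \<eta> ^ m * \<delta>" .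
  have 2: "norm (wcomp Phi w k m ?q - wcomp Psi w k m ?q) \<le> K * \<delta> * (1 - \<eta> ^ m) / (1 - \<eta>)"
    using Suc.IH[OF conjunct1[OF v] qX] .
  have "norm (wcomp Phi w k (Suc m) x - wcomp Psi w k (Suc m) x)
      = norm ((wcomp Phi w k m ?p - wcomp Phi w k m ?q) + (wcomp Phi w k m ?q - wcomp Psi w k m ?q))"
    by simp
  also have "\<dots> \<le> K * \<eta> ^ m * \<delta> + K * \<delta> * (1 - \<eta> ^ m) / (1 - \<eta>)"
    using norm_triangle_le[OF add_mono[OF 1 2]] .
  also have "\<dots> = K * \<delta> * (1 - \<eta> ^ Suc m) / (1 - \<eta>)"
    using eta by (simp add: field_simps)
  finally show ?case .
qed

lemma tele2: "valid I w k m \<Longrightarrow> x \<in> X \<Longrightarrow>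
   norm (wcomp Phi w k m x - wcomp Psi w k m x) \<le> K * \<delta> / (1 - \<eta>)"
proof -
  assume a: "valid I w k m" "x \<in> X"
  have "\<eta> ^ m \<ge> 0" using eta by simp
  then have "K * \<delta> * (1 - \<eta> ^ m) \<le> K * \<delta>" using K1 d0 by (simp add: mult_left_le)
  then have "K * \<delta> * (1 - \<eta> ^ m) / (1 - \<eta>) \<le> K * \<delta> / (1 - \<eta>)"
    using eta by (intro divide_right_mono) auto
  then show ?thesis using tele[OF a] by linarith
qed

end

locale three = two +
  fixes \<kappa> \<epsilon> :: real
  assumes kap: "\<kappa> > 0" "\<forall>n\<ge>1. \<forall>a\<in>I n. \<forall>x\<in>X. \<kappa> \<le> scal (Phi n a) x"
    and eps: "0 < \<epsilon>" "\<epsilon> \<le> 1/2"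
    and dscal: "\<forall>n\<ge>1. \<forall>a\<in>I n. \<forall>x\<in>X. \<bar>scal (Psi n a) x - scal (Phi n a) x\<bar> < \<delta>"
    and equi: "\<forall>n\<ge>1. \<forall>a\<in>I n. \<forall>x\<in>X. \<forall>y\<in>X. norm (x - y) \<le> K * \<delta> / (1 - \<eta>) \<longrightarrow>
                 \<bar>scal (Phi n a) x - scal (Phi n a) y\<bar> \<le> \<kappa> * \<epsilon> / 2"
    and dk: "\<delta> \<le> \<kappa> * \<epsilon> / 2"
begin

lemma one_step:
  assumes n: "n \<ge> 1" "a \<in> I n" and u: "u \<in> X" and v: "v \<in> X" and uv: "norm (u - v) \<le> K * \<delta> / (1 - \<eta>)"
  shows "scal (Psi n a) v \<le> (1 + 2 * \<epsilon>) * scal (Phi n a) u \<and> scal (Phi n a) u \<le> (1 + 2 * \<epsilon>) * scal (Psi n a) v"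
proof -
  define A where "A = scal (Psi n a) v"
  define B where "B = scal (Phi n a) u"
  have 1: "\<bar>A - scal (Phi n a) v\<bar> < \<delta>" unfolding A_def using dscal n v by blast
  have 2: "\<bar>scal (Phi n a) u - scal (Phi n a) v\<bar> \<le> \<kappa> * \<epsilon> / 2" using equi n u v uv by blast
  have AB: "\<bar>A - B\<bar> < \<kappa> * \<epsilon>" using 1 2 dk unfolding B_def by linarith
  have Bk: "\<kappa> \<le> B" unfolding B_def using kap n u by blast
  have ke: "\<kappa> * \<epsilon> \<le> B * \<epsilon>" using Bk eps by (simp add: mult_right_mono)
  have "A \<le> B + \<kappa> * \<epsilon>" using AB by linarith
  also have "\<dots> \<le> B + 2 * \<epsilon> * B" using ke eps Bk kap by (simp add: algebra_simps)
  finally have r1: "A \<le> (1 + 2 * \<epsilon>) * B" by (simp add: algebra_simps)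
  have "\<kappa> * \<epsilon> \<le> \<kappa> / 2" using eps kap by (simp add: mult_left_le)
  then have Ak: "\<kappa> / 2 \<le> A" using AB Bk by linarith
  have "\<kappa> \<le> 2 * A" using Ak by simp
  from mult_right_mono[OF this, of \<epsilon>] eps have "\<kappa> * \<epsilon> \<le> 2 * \<epsilon> * A" by (simp add: algebra_simps)
  then have r2: "B \<le> (1 + 2 * \<epsilon>) * A" using AB by (simp add: algebra_simps)
  show ?thesis using r1 r2 unfolding A_def B_def by blast
qed

lemma cmp: "valid I w k m \<Longrightarrow> x \<in> X \<Longrightarrow>
   scal (wcomp Psi w k m) x \<le> (1 + 2 * \<epsilon>) ^ m * scal (wcomp Phi w k m) x \<and>
   scal (wcomp Phi w k m) x \<le> (1 + 2 * \<epsilon>) ^ m * scal (wcomp Psi w k m) x"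
proof (induction m arbitrary: k)
  case 0 then show ?case using cf_scal[OF cf_id, of x, unfolded id_def] by simp
next
  case (Suc m)
  note v = valid_Suc_left[OF Suc.prems(1)]
  have xV: "x \<in> V" using Suc.prems(2) P.XV by blast
  let ?u = "wcomp Phi w (Suc k) m x" and ?v = "wcomp Psi w (Suc k) m x"
  let ?c = "1 + 2 * \<epsilon>"
  have uX: "?u \<in> X" using P.wcomp_X[OF conjunct1[OF v] Suc.prems(2)] .
  have vX: "?v \<in> X" using Q.wcomp_X[OF conjunct1[OF v] Suc.prems(2)] .
  have uv: "norm (?u - ?v) \<le> K * \<delta> / (1 - \<eta>)" using tele2[OF conjunct1[OF v] Suc.prems(2)] .
  have os: "scal (Psi k (w k)) ?v \<le> ?c * scal (Phi k (w k)) ?u \<and> scal (Phi k (w k)) ?u \<le> ?c * scal (Psi k (w k)) ?v"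
    using one_step[OF _ _ uX vX uv] v by blast
  have ih: "scal (wcomp Psi w (Suc k) m) x \<le> ?c ^ m * scal (wcomp Phi w (Suc k) m) x \<and>
   scal (wcomp Phi w (Suc k) m) x \<le> ?c ^ m * scal (wcomp Psi w (Suc k) m) x"
    using Suc.IH[OF conjunct1[OF v] Suc.prems(2)] .
  have eP: "scal (wcomp Phi w k (Suc m)) x = scal (Phi k (w k)) ?u * scal (wcomp Phi w (Suc k) m) x"
    using P.scal_wcomp_left[OF Suc.prems(1) xV] .
  have eQ: "scal (wcomp Psi w k (Suc m)) x = scal (Psi k (w k)) ?v * scal (wcomp Psi w (Suc k) m) x"
    using Q.scal_wcomp_left[OF Suc.prems(1) xV] .
  have p1: "0 \<le> scal (wcomp Phi w (Suc k) m) x" using P.scal_pos[OF conjunct1[OF v] xV] by simp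
  have p2: "0 \<le> scal (wcomp Psi w (Suc k) m) x" using Q.scal_pos[OF conjunct1[OF v] xV] by simp
  have p3: "0 \<le> scal (Phi k (w k)) ?u" using P.scal1_pos[of k "w k" ?u] v uX P.XV by force
  have p4: "0 \<le> scal (Psi k (w k)) ?v" using Q.scal1_pos[of k "w k" ?v] v vX P.XV by force
  have c0: "0 \<le> ?c" using eps by simp
  have "scal (Psi k (w k)) ?v * scal (wcomp Psi w (Suc k) m) x
      \<le> (?c * scal (Phi k (w k)) ?u) * (?c ^ m * scal (wcomp Phi w (Suc k) m) x)"
    by (rule mult_mono) (use os ih p2 p3 c0 in auto)
  then have A: "scal (wcomp Psi w k (Suc m)) x \<le> ?c ^ Suc m * scal (wcomp Phi w k (Suc m)) x"
    unfolding eP eQ by (simp add: algebra_simps)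
  have "scal (Phi k (w k)) ?u * scal (wcomp Phi w (Suc k) m) x
      \<le> (?c * scal (Psi k (w k)) ?v) * (?c ^ m * scal (wcomp Psi w (Suc k) m) x)"
    by (rule mult_mono) (use os ih p1 p4 c0 in auto)
  then have B: "scal (wcomp Phi w k (Suc m)) x \<le> ?c ^ Suc m * scal (wcomp Psi w k (Suc m)) x"
    unfolding eP eQ by (simp add: algebra_simps)
  show ?case using A B by blast
qed

end

context three begin

lemma nD: assumes v: "valid I w k m"
  shows "normD (wcomp Psi w k m) X \<le> (1 + 2 * \<epsilon>) ^ m * normD (wcomp Phi w k m) X \<and>
         normD (wcomp Phi w k m) X \<le> (1 + 2 * \<epsilon>) ^ m * normD (wcomp Psi w k m) X \<and>
         0 < normD (wcomp Phi w k m) X \<and> 0 < normD (wcomp Psi w k m) X"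
proof -
  let ?c = "(1 + 2 * \<epsilon>) ^ m"
  have c0: "0 \<le> ?c" using eps by simp
  have bP: "bdd_above (scal (wcomp Phi w k m) ` X)"
    by (rule bdd_aboveI2[of _ _ "\<eta> ^ m"]) (rule P.scal_le[OF v])
  have bQ: "bdd_above (scal (wcomp Psi w k m) ` X)"
    by (rule bdd_aboveI2[of _ _ "\<eta> ^ m"]) (rule Q.scal_le[OF v])
  obtain x0 where x0: "x0 \<in> X" using P.Xne by blast
  have x0V: "x0 \<in> V" using x0 P.XV by blast
  have A: "normD (wcomp Psi w k m) X \<le> ?c * normD (wcomp Phi w k m) X"
    unfolding normD_def
  proof (rule cSUP_least[OF P.Xne])
    fix x assume x: "x \<in> X"
    have "scal (wcomp Psi w k m) x \<le> ?c * scal (wcomp Phi w k m) x" using cmp[OF v x] by blast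
    also have "\<dots> \<le> ?c * (SUP x\<in>X. scal (wcomp Phi w k m) x)"
      by (rule mult_left_mono[OF cSUP_upper[OF x bP] c0])
    finally show "scal (wcomp Psi w k m) x \<le> ?c * (SUP x\<in>X. scal (wcomp Phi w k m) x)" .
  qed
  have B: "normD (wcomp Phi w k m) X \<le> ?c * normD (wcomp Psi w k m) X"
    unfolding normD_def
  proof (rule cSUP_least[OF P.Xne])
    fix x assume x: "x \<in> X"
    have "scal (wcomp Phi w k m) x \<le> ?c * scal (wcomp Psi w k m) x" using cmp[OF v x] by blast
    also have "\<dots> \<le> ?c * (SUP x\<in>X. scal (wcomp Psi w k m) x)"
      by (rule mult_left_mono[OF cSUP_upper[OF x bQ] c0])
    finally show "scal (wcomp Phi w k m) x \<le> ?c * (SUP x\<in>X. scal (wcomp Psi w k m) x)" .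
  qed
  have C: "0 < normD (wcomp Phi w k m) X"
    unfolding normD_def using P.scal_pos[OF v x0V] cSUP_upper[OF x0 bP] by linarith
  have D: "0 < normD (wcomp Psi w k m) X"
    unfolding normD_def using Q.scal_pos[OF v x0V] cSUP_upper[OF x0 bQ] by linarith
  show ?thesis using A B C D by blast
qed

end

lemma du_bound:
  assumes "du X I Psi Phi < ereal \<delta>" "n \<ge> 1" "a \<in> I n" "x \<in> X"
  shows "norm (Psi n a x - Phi n a x) < \<delta> \<and>
    onorm (\<lambda>v. frechet_derivative (Psi n a) (at x) v - frechet_derivative (Phi n a) (at x) v) < \<delta>"
proof -
  let ?M = "\<lambda>n a. max (SUP x\<in>X. ereal (norm (Psi n a x - Phi n a x)))
          (SUP x\<in>X. ereal (onorm (\<lambda>v. frechet_derivative (Psi n a) (at x) v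
                                     - frechet_derivative (Phi n a) (at x) v)))"
  have "?M n a \<le> (SUP a\<in>I n. ?M n a)" by (rule SUP_upper[OF assms(3)])
  also have "\<dots> \<le> du X I Psi Phi" unfolding du_def by (rule SUP_upper) (use assms(2) in simp)
  finally have M0: "?M n a \<le> du X I Psi Phi" .
  have M: "?M n a < ereal \<delta>" using M0 assms(1) by (rule le_less_trans)
  have "ereal (norm (Psi n a x - Phi n a x)) \<le> (SUP x\<in>X. ereal (norm (Psi n a x - Phi n a x)))"
    by (rule SUP_upper[OF assms(4)])
  also have "\<dots> \<le> ?M n a" by (rule max.cobounded1)
  finally have 1: "ereal (norm (Psi n a x - Phi n a x)) < ereal \<delta>" using M by (rule le_less_trans)
  have "ereal (onorm (\<lambda>v. frechet_derivative (Psi n a) (at x) v - frechet_derivative (Phi n a) (at x) v))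
      \<le> (SUP x\<in>X. ereal (onorm (\<lambda>v. frechet_derivative (Psi n a) (at x) v
                                     - frechet_derivative (Phi n a) (at x) v)))"
    by (rule SUP_upper[OF assms(4)])
  also have "\<dots> \<le> ?M n a" by (rule max.cobounded2)
  finally have 2: "ereal (onorm (\<lambda>v. frechet_derivative (Psi n a) (at x) v - frechet_derivative (Phi n a) (at x) v)) < ereal \<delta>" using M by (rule le_less_trans)
  show ?thesis using 1 2 by simp
qed

lemma onorm_diff:
  assumes "bounded_linear A" "bounded_linear B"
  shows "\<bar>onorm A - onorm B\<bar> \<le> onorm (\<lambda>v. A v - B v)"
proof -
  have bd: "bounded_linear (\<lambda>v. A v - B v)" using assms by (rule bounded_linear_sub)
  have "onorm (\<lambda>v. B v + (A v - B v)) \<le> onorm B + onorm (\<lambda>v. A v - B v)"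
    by (rule onorm_triangle[OF assms(2) bd])
  then have 1: "onorm A \<le> onorm B + onorm (\<lambda>v. A v - B v)" by simp
  have bd2: "bounded_linear (\<lambda>v. - (A v - B v))" using bounded_linear_minus[OF bd] .
  have "onorm (\<lambda>v. A v + - (A v - B v)) \<le> onorm A + onorm (\<lambda>v. - (A v - B v))"
    by (rule onorm_triangle[OF assms(1) bd2])
  moreover have "onorm (\<lambda>v. - (A v - B v)) = onorm (\<lambda>v. A v - B v)" by (rule onorm_neg)
  ultimately have 2: "onorm B \<le> onorm A + onorm (\<lambda>v. A v - B v)" by simp
  show ?thesis using 1 2 by linarith
qed

context ncifs begin
lemma bl: assumes "n \<ge> 1" "a \<in> I n" "x \<in> V"
  shows "bounded_linear (frechet_derivative (Phi n a) (at x))"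
proof -
  obtain L where "(Phi n a has_derivative L) (at x)" using cf_Phi[OF assms] unfolding cf_def by blast
  then show ?thesis using frechet_derivative_at has_derivative_bounded_linear by metis
qed
end

lemma press_cmp:
  fixes f g :: "nat \<Rightarrow> 'w \<Rightarrow> real"
  assumes A: "\<And>n. n \<ge> 1 \<Longrightarrow> finite (A n) \<and> A n \<noteq> {}" and c: "c \<ge> 1" and t: "t \<ge> 0"
    and fg: "\<And>n w. n \<ge> 1 \<Longrightarrow> w \<in> A n \<Longrightarrow> 0 < f n w \<and> 0 < g n w \<and> g n w \<le> c ^ n * f n w"
  shows "(1 / real n) * ln (\<Sum>w\<in>A n. g n w powr t) \<le> (1 / real n) * ln (\<Sum>w\<in>A n. f n w powr t) + t * ln c"
proof (cases "n = 0")
  case True then show ?thesis using c t by simp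
next
  case False
  then have n: "n \<ge> 1" by simp
  have fin: "finite (A n)" and ne: "A n \<noteq> {}" using A[OF n] by auto
  have c0: "0 < c ^ n" using c by simp
  have "(\<Sum>w\<in>A n. g n w powr t) \<le> (\<Sum>w\<in>A n. (c ^ n * f n w) powr t)"
    by (rule sum_mono, rule powr_mono2) (use fg[OF n] t in \<open>auto simp: order_less_imp_le\<close>)
  also have "\<dots> = (c ^ n) powr t * (\<Sum>w\<in>A n. f n w powr t)"
    by (simp add: sum_distrib_left powr_mult c0 less_imp_le fg[OF n])
  finally have le: "(\<Sum>w\<in>A n. g n w powr t) \<le> (c ^ n) powr t * (\<Sum>w\<in>A n. f n w powr t)" .
  have gp: "0 < g n w powr t" if "w \<in> A n" for w
  proof -
    have "0 < g n w" using fg[OF n that] by blast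
    then show ?thesis by simp
  qed
  have fp: "0 < f n w powr t" if "w \<in> A n" for w
  proof -
    have "0 < f n w" using fg[OF n that] by blast
    then show ?thesis by simp
  qed
  have pg: "0 < (\<Sum>w\<in>A n. g n w powr t)" by (rule sum_pos[OF fin ne gp])
  have pf: "0 < (\<Sum>w\<in>A n. f n w powr t)" by (rule sum_pos[OF fin ne fp])
  have pc: "0 < (c ^ n) powr t" using c0 by (simp only: powr_gt_zero)
  have "ln (\<Sum>w\<in>A n. g n w powr t) \<le> ln ((c ^ n) powr t * (\<Sum>w\<in>A n. f n w powr t))"
    using le pg by simp
  also have "\<dots> = ln ((c ^ n) powr t) + ln (\<Sum>w\<in>A n. f n w powr t)" using pc pf by (simp add: ln_mult)
  also have "ln ((c ^ n) powr t) = real n * (t * ln c)" using c0 c by (simp add: ln_powr ln_realpow)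
  finally have "ln (\<Sum>w\<in>A n. g n w powr t) \<le> real n * (t * ln c) + ln (\<Sum>w\<in>A n. f n w powr t)" .
  then have "(1 / real n) * ln (\<Sum>w\<in>A n. g n w powr t) \<le> (1 / real n) * (real n * (t * ln c) + ln (\<Sum>w\<in>A n. f n w powr t))"
    by (rule mult_left_mono) simp
  also have "\<dots> = (1 / real n) * ln (\<Sum>w\<in>A n. f n w powr t) + t * ln c" using n by (simp add: field_simps)
  finally show ?thesis .
qed

lemma liminf_cmp:
  fixes a b :: "nat \<Rightarrow> real"
  assumes "\<And>n. a n \<le> b n + e"
  shows "liminf (\<lambda>n. ereal (a n)) \<le> liminf (\<lambda>n. ereal (b n)) + ereal e"
proof -
  have "liminf (\<lambda>n. ereal (a n)) \<le> liminf (\<lambda>n. ereal (b n) + ereal e)"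
    by (rule Liminf_mono) (use assms in auto)
  also have "\<dots> = liminf (\<lambda>n. ereal (b n)) + ereal e"
    by (rule Liminf_add_ereal_right) auto
  finally show ?thesis .
qed

lemma ereal_nbhd:
  fixes p :: ereal
  assumes "open S" "p \<in> S"
  shows "\<exists>e>0. \<forall>q. q \<le> p + ereal e \<and> p \<le> q + ereal e \<longrightarrow> q \<in> S"
proof (cases p)
  case (real r)
  have "open (ereal -` S)" by (rule open_ereal_vimage[OF assms(1)])
  moreover have "r \<in> ereal -` S" using assms real by simp
  ultimately obtain e where e: "e > 0" "ball r e \<subseteq> ereal -` S" using openE by blast
  show ?thesis
  proof (intro exI[of _ "e / 2"] conjI allI impI)
    show "0 < e / 2" using e by simp
    fix q assume q: "q \<le> p + ereal (e / 2) \<and> p \<le> q + ereal (e / 2)"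
    show "q \<in> S"
    proof (cases q)
      case (real s)
      then have "s \<le> r + e / 2" "r \<le> s + e / 2" using q \<open>p = ereal r\<close> by auto
      then have "\<bar>s - r\<bar> \<le> e / 2" by (intro abs_leI) linarith+
      then have "s \<in> ball r e" using e by (simp add: dist_real_def abs_minus_commute)
      then show ?thesis using e real by auto
    qed (use q \<open>p = ereal r\<close> in auto)
  qed
next
  case PInf
  show ?thesis
  proof (intro exI[of _ 1] conjI allI impI)
    fix q assume q: "q \<le> p + ereal 1 \<and> p \<le> q + ereal 1"
    then have "q = \<infinity>" using PInf by (cases q) auto
    then show "q \<in> S" using assms PInf by simp
  qed simp
next
  case MInf
  show ?thesis
  proof (intro exI[of _ 1] conjI allI impI)
    fix q assume q: "q \<le> p + ereal 1 \<and> p \<le> q + ereal 1"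
    then have "q = -\<infinity>" using MInf by (cases q) auto
    then show "q \<in> S" using assms MInf by simp
  qed simp
qed


theorem theorem10p3:
  fixes X V :: "'a::euclidean_space set" and K \<eta> t :: real and I :: "nat \<Rightarrow> 'b set"
  assumes "compact X" and "X \<noteq> {}" and "closure (interior X) = X"
    and "smooth_boundary X \<or> convex X"
    and "open V" and "connected V" and "X \<subseteq> V"
    and "K \<ge> 1" and "\<eta> < 1"
    and "\<forall>n\<ge>1. finite (I n) \<and> I n \<noteq> {}"
    and "t \<ge> 0"
  shows "\<forall>Phi\<in>Ku X V K \<eta> I. \<forall>S. open S \<and> lower_pressure X I Phi t \<in> S \<longrightarrow>
           (\<exists>\<delta>>0. \<forall>Psi\<in>Ku X V K \<eta> I. du X I Psi Phi < ereal \<delta> \<longrightarrow>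
                     lower_pressure X I Psi t \<in> S)"
proof (intro ballI allI impI)
  note cX = assms(1) and Xne = assms(2) and oV = assms(5) and XV = assms(7) and K1 = assms(8)
    and eta1 = assms(9) and Ifin = assms(10) and t0 = assms(11)
  fix Phi S assume PhiK: "Phi \<in> Ku X V K \<eta> I" and S: "open S \<and> lower_pressure X I Phi t \<in> S"
  from PhiK have ncP: "NCIFS X V K \<eta> I Phi"
    and kap0: "\<exists>\<kappa>>0. (INF p\<in>{(n, a, x). n \<ge> 1 \<and> a \<in> I n \<and> x \<in> X}.
                  scal (Phi (fst p) (fst (snd p))) (snd (snd p))) > \<kappa>"
    and eqc: "\<forall>\<epsilon>>0. \<exists>\<delta>>0. \<forall>n\<ge>1. \<forall>a\<in>I n. \<forall>x\<in>X. \<forall>y\<in>X. dist x y < \<delta> \<longrightarrow>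
          \<bar>scal (Phi n a) x - scal (Phi n a) y\<bar> < \<epsilon>"
    unfolding Ku_def by auto
  interpret P: ncifs X V K \<eta> I Phi using ncP XV Xne by unfold_locales auto
  obtain \<kappa> where kap: "\<kappa> > 0" and kapI: "(INF p\<in>{(n, a, x). n \<ge> 1 \<and> a \<in> I n \<and> x \<in> X}.
                  scal (Phi (fst p) (fst (snd p))) (snd (snd p))) > \<kappa>" using kap0 by blast
  have kapb: "\<forall>n\<ge>1. \<forall>a\<in>I n. \<forall>x\<in>X. \<kappa> \<le> scal (Phi n a) x"
  proof (intro allI impI ballI)
    fix n a x assume n: "n \<ge> 1" and a: "a \<in> I n" and x: "x \<in> X"
    let ?T = "{(n, a, x). n \<ge> 1 \<and> a \<in> I n \<and> x \<in> X}"
    let ?f = "\<lambda>p. scal (Phi (fst p) (fst (snd p))) (snd (snd p))"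
    have bb: "bdd_below (?f ` ?T)"
    proof (rule bdd_belowI2[of _ 0])
      fix p assume "p \<in> ?T"
      then show "0 \<le> ?f p" using P.scal1_pos XV by (auto simp: less_imp_le subset_iff)
    qed
    have "(n, a, x) \<in> ?T" using n a x by simp
    from cINF_lower[OF bb this] kapI show "\<kappa> \<le> scal (Phi n a) x" by simp
  qed
  define p where "p = lower_pressure X I Phi t"
  obtain e where e: "e > 0" and eS: "\<forall>q. q \<le> p + ereal e \<and> p \<le> q + ereal e \<longrightarrow> q \<in> S"
    using ereal_nbhd[of S p] S unfolding p_def by blast
  define \<epsilon> where "\<epsilon> = min (1/2) ((exp (e / (t + 1)) - 1) / 2)"
  have ex1: "exp (e / (t + 1)) > 1" using e t0 by simp
  have eps: "0 < \<epsilon>" "\<epsilon> \<le> 1/2" unfolding \<epsilon>_def using ex1 by auto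
  have c1: "1 + 2 * \<epsilon> \<ge> 1" using eps by simp
  have "\<epsilon> \<le> (exp (e / (t + 1)) - 1) / 2" unfolding \<epsilon>_def by (rule min.cobounded2)
  then have "1 + 2 * \<epsilon> \<le> exp (e / (t + 1))" by (simp add: field_simps)
  then have "ln (1 + 2 * \<epsilon>) \<le> e / (t + 1)" using eps by (metis ln_exp ln_le_cancel_iff add_pos_pos exp_gt_zero mult_pos_pos zero_less_numeral zero_less_one)
  then have "t * ln (1 + 2 * \<epsilon>) \<le> t * (e / (t + 1))" using t0 by (rule mult_left_mono)
  also have "\<dots> \<le> e" using t0 e by (simp add: field_simps)
  finally have tl: "t * ln (1 + 2 * \<epsilon>) \<le> e" .
  have ke: "\<kappa> * \<epsilon> / 2 > 0" using kap eps by simp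
  obtain \<delta>0 where d0: "\<delta>0 > 0" and d0e: "\<forall>n\<ge>1. \<forall>a\<in>I n. \<forall>x\<in>X. \<forall>y\<in>X. dist x y < \<delta>0 \<longrightarrow>
          \<bar>scal (Phi n a) x - scal (Phi n a) y\<bar> < \<kappa> * \<epsilon> / 2"
    using eqc ke by blast
  obtain r where r: "r > 0" and rV: "(\<Union>x\<in>X. ball x r) \<subseteq> V"
    using compact_subset_open_imp_ball_epsilon_subset[OF cX oV XV] by blast
  obtain a1 where a1: "a1 \<in> I 1" using Ifin by fastforce
  obtain x0 where x0: "x0 \<in> X" using Xne by blast
  have eta0: "0 \<le> \<eta>" using P.scal1_le[of 1 a1 x0] P.scal1_pos[of 1 a1 x0] a1 x0 XV by force
  define \<delta> where "\<delta> = min (min r (\<kappa> * \<epsilon> / 2)) (\<delta>0 * (1 - \<eta>) / (2 * K))"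
  have dpos: "\<delta> > 0" unfolding \<delta>_def using r ke d0 eta1 K1 by auto
  have "K * \<delta> \<le> K * (\<delta>0 * (1 - \<eta>) / (2 * K))" unfolding \<delta>_def using K1 by (intro mult_left_mono) auto
  also have "\<dots> = \<delta>0 * (1 - \<eta>) / 2" using K1 by (simp add: field_simps)
  finally have "K * \<delta> / (1 - \<eta>) \<le> \<delta>0 * (1 - \<eta>) / 2 / (1 - \<eta>)" using eta1 by (intro divide_right_mono) auto
  also have "\<dots> = \<delta>0 / 2" using eta1 by (simp add: field_simps)
  finally have Kd: "K * \<delta> / (1 - \<eta>) < \<delta>0" using d0 by linarith
  show "\<exists>\<delta>>0. \<forall>Psi\<in>Ku X V K \<eta> I. du X I Psi Phi < ereal \<delta> \<longrightarrow> lower_pressure X I Psi t \<in> S"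
  proof (intro exI[of _ \<delta>] conjI ballI impI)
    show "\<delta> > 0" by (rule dpos)
    fix Psi assume PsiK: "Psi \<in> Ku X V K \<eta> I" and du: "du X I Psi Phi < ereal \<delta>"
    have ncQ: "NCIFS X V K \<eta> I Psi" using PsiK unfolding Ku_def by auto
    interpret Q: ncifs X V K \<eta> I Psi using ncQ XV Xne by unfold_locales auto
    have close: "\<forall>n\<ge>1. \<forall>a\<in>I n. \<forall>x\<in>X. norm (Psi n a x - Phi n a x) < \<delta>"
      using du_bound[OF du] by blast
    have dscal: "\<forall>n\<ge>1. \<forall>a\<in>I n. \<forall>x\<in>X. \<bar>scal (Psi n a) x - scal (Phi n a) x\<bar> < \<delta>"
    proof (intro allI impI ballI)
      fix n a x assume n: "n \<ge> 1" and a: "a \<in> I n" and x: "x \<in> X"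
      have xV: "x \<in> V" using x XV by blast
      have "\<bar>scal (Psi n a) x - scal (Phi n a) x\<bar> \<le>
          onorm (\<lambda>v. frechet_derivative (Psi n a) (at x) v - frechet_derivative (Phi n a) (at x) v)"
        unfolding scal_def by (rule onorm_diff[OF Q.bl[OF n a xV] P.bl[OF n a xV]])
      also have "\<dots> < \<delta>" using du_bound[OF du n a x] by blast
      finally show "\<bar>scal (Psi n a) x - scal (Phi n a) x\<bar> < \<delta>" .
    qed
    have equi: "\<forall>n\<ge>1. \<forall>a\<in>I n. \<forall>x\<in>X. \<forall>y\<in>X. norm (x - y) \<le> K * \<delta> / (1 - \<eta>) \<longrightarrow>
                 \<bar>scal (Phi n a) x - scal (Phi n a) y\<bar> \<le> \<kappa> * \<epsilon> / 2"
    proof (intro allI impI ballI)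
      fix n a x y assume n: "n \<ge> 1" and a: "a \<in> I n" and x: "x \<in> X" and y: "y \<in> X"
        and xy: "norm (x - y) \<le> K * \<delta> / (1 - \<eta>)"
      have "dist x y < \<delta>0" using xy Kd by (simp add: dist_norm)
      then show "\<bar>scal (Phi n a) x - scal (Phi n a) y\<bar> \<le> \<kappa> * \<epsilon> / 2" using d0e n a x y
        by (meson less_imp_le)
    qed
    interpret T: three X V K \<eta> I Phi Psi r \<delta> \<kappa> \<epsilon>
    proof unfold_locales
      show "\<forall>a\<in>X. ball a r \<subseteq> V" using rV by blast
      show "\<delta> \<le> r" unfolding \<delta>_def by simp
      show "\<delta> \<le> \<kappa> * \<epsilon> / 2" unfolding \<delta>_def by simp
    qed (use r K1 eta1 eta0 close dpos kap kapb eps dscal equi in auto)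
    define c where "c = 1 + 2 * \<epsilon>"
    have Afin: "finite (PiE {1..n} I) \<and> PiE {1..n} I \<noteq> {}" if "n \<ge> 1" for n :: nat
    proof -
      have "finite (PiE {1..n} I)" by (rule finite_PiE) (use Ifin in auto)
      moreover have "PiE {1..n} I \<noteq> {}" using Ifin by (auto simp: PiE_eq_empty_iff)
      ultimately show ?thesis by blast
    qed
    have wv: "valid I w 1 n" if "w \<in> PiE {1..n} I" for w n
      using that unfolding valid_def by (auto simp: PiE_iff)
    have fg1: "0 < normD (wcomp Phi w 1 n) X \<and> 0 < normD (wcomp Psi w 1 n) X \<and>
        normD (wcomp Psi w 1 n) X \<le> c ^ n * normD (wcomp Phi w 1 n) X"
      if "n \<ge> 1" "w \<in> PiE {1..n} I" for n w
      using T.nD[OF wv[OF that(2)]] unfolding c_def by blast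
    have fg2: "0 < normD (wcomp Psi w 1 n) X \<and> 0 < normD (wcomp Phi w 1 n) X \<and>
        normD (wcomp Phi w 1 n) X \<le> c ^ n * normD (wcomp Psi w 1 n) X"
      if "n \<ge> 1" "w \<in> PiE {1..n} I" for n w
      using T.nD[OF wv[OF that(2)]] unfolding c_def by blast
    have cc: "c \<ge> 1" using c1 unfolding c_def .
    have A1: "(1 / real n) * ln (\<Sum>w\<in>PiE {1..n} I. normD (wcomp Psi w 1 n) X powr t)
      \<le> (1 / real n) * ln (\<Sum>w\<in>PiE {1..n} I. normD (wcomp Phi w 1 n) X powr t) + t * ln c" for n
      by (rule press_cmp[of "\<lambda>n. PiE {1..n} I", OF Afin cc t0 fg1])
    have A2: "(1 / real n) * ln (\<Sum>w\<in>PiE {1..n} I. normD (wcomp Phi w 1 n) X powr t)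
      \<le> (1 / real n) * ln (\<Sum>w\<in>PiE {1..n} I. normD (wcomp Psi w 1 n) X powr t) + t * ln c" for n
      by (rule press_cmp[of "\<lambda>n. PiE {1..n} I", OF Afin cc t0 fg2])
    define q where "q = lower_pressure X I Psi t"
    have L1: "q \<le> p + ereal (t * ln c)" unfolding q_def p_def lower_pressure_def
      by (rule liminf_cmp) (rule A1)
    have L2: "p \<le> q + ereal (t * ln c)" unfolding q_def p_def lower_pressure_def
      by (rule liminf_cmp) (rule A2)
    have tle: "ereal (t * ln c) \<le> ereal e" using tl unfolding c_def by simp
    have "q \<le> p + ereal e" using L1 add_left_mono[OF tle, of p] by (rule order.trans)
    moreover have "p \<le> q + ereal e" using L2 add_left_mono[OF tle, of q] by (rule order.trans)
    ultimately have "q \<in> S" using eS by blast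
    then show "lower_pressure X I Psi t \<in> S" unfolding q_def .
  qed
qed

end
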